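(* Let $q\in(-\infty,q_1)$ and let $P^{u,+}(q)$, $P^{u,-}(q)$ be the limits of $P_1^u(q-i\eta)$, resp. $P_1^u(q+i\eta)$, as $\eta\downarrow0$ (these are complex conjugate), and define $P^{v,\pm}(q)$ similarly from $P_1^v$. Suppose complex numbers $m(q),n(q),E$ and values $\ell_1(P^{u,\pm}(q))$, $\ell_2(P^{v,\pm}(q))$ satisfy, for both signs $\pm$, $$A(P^{u,\pm}(q),q)\,m(q)+\theta\,n(q)+C(P^{u,\pm}(q),q)\,\ell_1(P^{u,\pm}(q))+E=0,$$ $$B(P^{v,\pm}(q),q)\,m(q)-\theta\,n(q)+D(P^{v,\pm}(q),q)\,\ell_2(P^{v,\pm}(q))-E=0.$$ Put $\alpha=A(P^{u,+}(q),q)$, $\beta=B(P^{v,+}(q),q)$, $\gamma=C(P^{u,+}(q),q)$, $\delta=D(P^{v,+}(q),q)$ (so that $\bar\alpha=A(P^{u,-}(q),q)$ etc.), $\Delta(q)=-(\alpha+\beta)=-\theta(q+P^{u,+}(q)+P^{v,+}(q))$, and assume $\gamma\ne0$, $\delta\neq0$, $\Delta(q)\ne0$. Then, with $L^\pm(q)=\big(\ell_1(P^{u,\pm}(q)),\ell_2(P^{v,\pm}(q))\big)^{T}$, $$L^+(q)=G(q)L^-(q),\qquad G(q)=\frac{1}{\overline{\Delta(q)}}\begin{pmatrix}-\frac{\bar\gamma(\alpha+\bar\beta)}{\gamma}&\frac{\bar\delta(\bar\alpha-\alpha)}{\gamma}\\[2pt]\frac{\bar\gamma(\bar\beta-\b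eta)}{\delta}&-\frac{\bar\delta(\beta+\bar\alpha)}{\delta}\end{pmatrix}.$$
   Context: $\sigma_1,\sigma_2,\rho$ real with $\sigma_1\sigma_2-\rho^2>0$, $\theta=\frac{\sigma_1+\sigma_2-2\rho}{2}$, $\mu_1,\mu_2,r_1,r_2$ real. $U(p,q)=\theta p^2+\frac{\sigma_2}{2}q^2+(\sigma_2-\rho)pq+(\mu_2-\mu_1)p+\mu_2q$, $V(p,q)=\theta p^2+\frac{\sigma_1}{2}q^2+(\sigma_1-\rho)pq+(\mu_1-\mu_2)p+\mu_1q$; $A(p,q)=\frac{\theta(2p+q)}{2}+\frac{(\sigma_2-\sigma_1)q}{2}+\mu_2-\mu_1$, $B(p,q)=\frac{\theta(2p+q)}{2}+\frac{(\sigma_1-\sigma_2)q}{2}+\mu_1-\mu_2$, $C(p,q)=(1-r_1)p+q$, $D(p,q)=(1-r_2)p+q$. $q_1\le q_2$ are the real roots of $(\rho^2-\sigma_1\sigma_2)q^2+2[\mu_1(\rho-\sigma_2)+\mu_2(\rho-\sigma_1)]q+(\mu_1-\mu_2)^2=0$; $P_1^u$ (resp. $P_1^v$) is the root in $p$ of $U(p,q)=0$ (resp. $V(p,q)=0$) with the smaller real part, analytic on $\mathbb{C}\setminus((-\infty,q_1]\cup[q_2,\infty))$. In the application, $m,n$ are the diagonal Laplace transforms of the stationary density, $E$ a constant, and $\ell_1(p)=\int_{-\infty}^0e^{-pz}\nu_1(z)\mathrm{d}z$, $\ell_2(p)=\int_{-\infty}^0e^{-pz}\nu_2(z)\mathrm{d}z$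 (continued meromorphically) for the reflected Brownian motion in the three-quarter plane. *)

theory Defs
  imports "HOL-Analysis.Analysis"
begin

definition theta :: "real \<Rightarrow> real \<Rightarrow> real \<Rightarrow> real" where
  "theta s1 s2 rho = (s1 + s2 - 2 * rho) / 2"

definition Ufun :: "real \<Rightarrow> real \<Rightarrow> real \<Rightarrow> real \<Rightarrow> real \<Rightarrow> complex \<Rightarrow> complex \<Rightarrow> complex" where
  "Ufun s1 s2 rho mu1 mu2 p q =
     of_real (theta s1 s2 rho) * p^2 + of_real (s2 / 2) * q^2 + of_real (s2 - rho) * p * q
     + of_real (mu2 - mu1) * p + of_real mu2 * q"

definition Vfun :: "real \<Rightarrow> real \<Rightarrow> real \<Rightarrow> real \<Rightarrow> real \<Rightarrow> complex \<Rightarrow> complex \<Rightarrow> complex" where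
  "Vfun s1 s2 rho mu1 mu2 p q =
     of_real (theta s1 s2 rho) * p^2 + of_real (s1 / 2) * q^2 + of_real (s1 - rho) * p * q
     + of_real (mu1 - mu2) * p + of_real mu1 * q"

definition Afun :: "real \<Rightarrow> real \<Rightarrow> real \<Rightarrow> real \<Rightarrow> real \<Rightarrow> complex \<Rightarrow> complex \<Rightarrow> complex" where
  "Afun s1 s2 rho mu1 mu2 p q =
     of_real (theta s1 s2 rho) * (2 * p + q) / 2 + of_real (s2 - s1) * q / 2 + of_real (mu2 - mu1)"

definition Bfun :: "real \<Rightarrow> real \<Rightarrow> real \<Rightarrow> real \<Rightarrow> real \<Rightarrow> complex \<Rightarrow> complex \<Rightarrow> complex" where
  "Bfun s1 s2 rho mu1 mu2 p q =
     of_real (theta s1 s2 rho) * (2 * p + q) / 2 + of_real (s1 - s2) * q / 2 + of_real (mu1 - mu2)"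

definition Cfun :: "real \<Rightarrow> complex \<Rightarrow> complex \<Rightarrow> complex" where
  "Cfun r1 p q = of_real (1 - r1) * p + q"

definition Dfun :: "real \<Rightarrow> complex \<Rightarrow> complex \<Rightarrow> complex" where
  "Dfun r2 p q = of_real (1 - r2) * p + q"

text \<open>The polynomial whose real roots are q1 \<le> q2.\<close>
definition branchpoly :: "real \<Rightarrow> real \<Rightarrow> real \<Rightarrow> real \<Rightarrow> real \<Rightarrow> real \<Rightarrow> real" where
  "branchpoly s1 s2 rho mu1 mu2 q =
     (rho^2 - s1 * s2) * q^2 + 2 * (mu1 * (rho - s2) + mu2 * (rho - s1)) * q + (mu1 - mu2)^2"

definition slit_domain :: "real \<Rightarrow> real \<Rightarrow> complex set" where
  "slit_domain q1 q2 = {z. Im z \<noteq> 0 \<or> (q1 < Re z \<and> Re z < q2)}"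

end

theory Submission
  imports Defs
begin

lemma alg:
  fixes a b g d ac bc gc dc m tn l1p l1m l2p l2m :: complex
  assumes e1: "a*m + tn + g*l1p = 0" and e2: "ac*m + tn + gc*l1m = 0"
    and e3: "b*m - tn + d*l2p = 0" and e4: "bc*m - tn + dc*l2m = 0"
    and g: "g \<noteq> 0" and d: "d \<noteq> 0" and D: "ac + bc \<noteq> 0"
  shows "l1p = (1 / (-(ac+bc))) * ((- gc * (a + bc) / g) * l1m + (dc * (ac - a) / g) * l2m) \<and>
         l2p = (1 / (-(ac+bc))) * ((gc * (bc - b) / d) * l1m + (- dc * (b + ac) / d) * l2m)"
proof -
  define Dc where "Dc = ac + bc"
  have Dc: "Dc \<noteq> 0" using D Dc_def by simp
  have s: "Dc*m + (gc*l1m + dc*l2m) = (ac*m + tn + gc*l1m) + (bc*m - tn + dc*l2m)"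
    unfolding Dc_def by (simp add: algebra_simps)
  have "Dc*m + (gc*l1m + dc*l2m) = 0" unfolding s e2 e4 by simp
  hence Dm: "Dc*m = - (gc*l1m + dc*l2m)" by (simp only: add_eq_0_iff2)
  have s1: "g*l1p - (gc*l1m + (ac - a)*m) = (a*m + tn + g*l1p) - (ac*m + tn + gc*l1m)"
    by (simp add: algebra_simps)
  have h1: "g*l1p = gc*l1m + (ac - a)*m" using s1 unfolding e1 e2 by simp
  have s2: "d*l2p - (dc*l2m + (bc - b)*m) = (b*m - tn + d*l2p) - (bc*m - tn + dc*l2m)"
    by (simp add: algebra_simps)
  have h2: "d*l2p = dc*l2m + (bc - b)*m" using s2 unfolding e3 e4 by simp
  have k1: "Dc*(g*l1p) = Dc*(gc*l1m) + (ac - a)*(Dc*m)" unfolding h1 by (simp add: algebra_simps)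
  have k1': "Dc*(g*l1p) = gc*(a+bc)*l1m - dc*(ac-a)*l2m" 
  proof -
    have "Dc*(g*l1p) = Dc*(gc*l1m) - (ac - a)*(gc*l1m + dc*l2m)" using k1 Dm by (simp add: algebra_simps)
    thus ?thesis unfolding Dc_def by (simp add: algebra_simps)
  qed
  have k2: "Dc*(d*l2p) = Dc*(dc*l2m) + (bc - b)*(Dc*m)" unfolding h2 by (simp add: algebra_simps)
  have k2': "Dc*(d*l2p) = dc*(b+ac)*l2m - gc*(bc-b)*l1m" 
  proof -
    have "Dc*(d*l2p) = Dc*(dc*l2m) - (bc - b)*(gc*l1m + dc*l2m)" using k2 Dm by (simp add: algebra_simps)
    thus ?thesis unfolding Dc_def by (simp add: algebra_simps)
  qed
  have r1: "(1 / (-Dc)) * ((- gc * (a + bc) / g) * l1m + (dc * (ac - a) / g) * l2m) = (gc*(a+bc)*l1m - dc*(ac-a)*l2m) / (Dc*g)"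
    using Dc g by (simp add: field_simps)
  have r2: "(1 / (-Dc)) * ((gc * (bc - b) / d) * l1m + (- dc * (b + ac) / d) * l2m) = (dc*(b+ac)*l2m - gc*(bc-b)*l1m) / (Dc*d)"
    using Dc d by (simp add: field_simps)
  have "l1p = (gc*(a+bc)*l1m - dc*(ac-a)*l2m) / (Dc*g)"
    proof -
    have "l1p * (Dc*g) = Dc*(g*l1p)" by (simp add: ac_simps)
    thus ?thesis using k1' Dc g by (simp add: eq_divide_eq)
  qed
  moreover have "l2p = (dc*(b+ac)*l2m - gc*(bc-b)*l1m) / (Dc*d)"
    proof -
    have "l2p * (Dc*d) = Dc*(d*l2p)" by (simp add: ac_simps)
    thus ?thesis using k2' Dc d by (simp add: eq_divide_eq)
  qed
  ultimately show ?thesis using r1 r2 unfolding Dc_def by simp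
qed
lemma quad_root_eq:
  fixes th cq bp bz cl :: real and x y w :: complex
  assumes th: "th \<noteq> 0"
    and fx: "of_real th * x^2 + of_real cq * w^2 + of_real bp * x * w + of_real bz * x + of_real cl * w = 0"
    and fy: "of_real th * y^2 + of_real cq * w^2 + of_real bp * y * w + of_real bz * y + of_real cl * w = 0"
    and re: "Re x = Re y"
    and imw: "Im w \<noteq> 0"
    and nd: "2*bp*(bp*Re w+bz) - 4*th*(2*cq*Re w + cl) \<noteq> 0"
  shows "x = y"
proof (rule ccontr)
  assume xy: "x \<noteq> y"
  define b where "b = of_real bp * w + of_real bz"
  define c where "c = of_real cq * w^2 + of_real cl * w"
  have fx': "of_real th * x^2 + b * x + c = 0" using fx unfolding b_def c_def by (simp add: algebra_simps)
  have fy': "of_real th * y^2 + b * y + c = 0" using fy unfolding b_def c_def by (simp add: algebra_simps)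
  have "(x - y) * (of_real th * (x + y) + b) = (of_real th * x^2 + b * x + c) - (of_real th * y^2 + b * y + c)"
    by (simp add: algebra_simps power2_eq_square)
  hence "(x - y) * (of_real th * (x + y) + b) = 0" using fx' fy' by simp
  hence sum: "of_real th * (x + y) + b = 0" using xy by simp
  have "(2 * of_real th * x + b)^2 = b^2 - 4 * of_real th * c"
  proof -
    have "(2 * of_real th * x + b)^2 = 4 * of_real th * (of_real th * x^2 + b * x + c) + b^2 - 4 * of_real th * c"
      by (simp add: algebra_simps power2_eq_square)
    thus ?thesis using fx' by simp
  qed
  moreover have "2 * of_real th * x + b = of_real th * (x - y)"
      proof -
    have "2 * of_real th * x + b = of_real th * (x - y) + (of_real th * (x + y) + b)"
      by (simp add: algebra_simps)
    thus ?thesis using sum by simp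
  qed
  moreover have "Im ((of_real th * (x - y))^2) = 0"
    using re by (simp add: power2_eq_square)
  moreover have "Im (b^2 - 4 * of_real th * c) = Im w * (2*bp*(bp*Re w+bz) - 4*th*(2*cq*Re w + cl))"
    unfolding b_def c_def by (simp add: power2_eq_square algebra_simps)
  ultimately show False using imw nd by simp
qed
theorem theorem4p4:
  fixes s1 s2 rho mu1 mu2 r1 r2 q1 q2 q :: real
    and P1u P1v :: "complex \<Rightarrow> complex"
    and Pup Pum Pvp Pvm m n E l1p l1m l2p l2m :: complex
  assumes cov: "s1 * s2 - rho^2 > 0"
    and q12: "q1 \<le> q2"
    and q12_roots: "\<forall>x::real. branchpoly s1 s2 rho mu1 mu2 x = 0 \<longleftrightarrow> (x = q1 \<or> x = q2)"
    and P1u_an: "P1u analytic_on slit_domain q1 q2"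
    and P1u_root: "\<forall>z\<in>slit_domain q1 q2. Ufun s1 s2 rho mu1 mu2 (P1u z) z = 0 \<and>
                     (\<forall>p. Ufun s1 s2 rho mu1 mu2 p z = 0 \<longrightarrow> Re (P1u z) \<le> Re p)"
    and P1v_an: "P1v analytic_on slit_domain q1 q2"
    and P1v_root: "\<forall>z\<in>slit_domain q1 q2. Vfun s1 s2 rho mu1 mu2 (P1v z) z = 0 \<and>
                     (\<forall>p. Vfun s1 s2 rho mu1 mu2 p z = 0 \<longrightarrow> Re (P1v z) \<le> Re p)"
    and hq: "q < q1"
    and lim_up: "((\<lambda>\<eta>::real. P1u (complex_of_real q - \<i> * complex_of_real \<eta>)) \<longlongrightarrow> Pup) (at_right 0)"
    and lim_um: "((\<lambda>\<eta>::real. P1u (complex_of_real q + \<i> * complex_of_real \<eta>)) \<longlongrightarrow> Pum) (at_right 0)"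
    and lim_vp: "((\<lambda>\<eta>::real. P1v (complex_of_real q - \<i> * complex_of_real \<eta>)) \<longlongrightarrow> Pvp) (at_right 0)"
    and lim_vm: "((\<lambda>\<eta>::real. P1v (complex_of_real q + \<i> * complex_of_real \<eta>)) \<longlongrightarrow> Pvm) (at_right 0)"
    and eq1p: "Afun s1 s2 rho mu1 mu2 Pup q * m + of_real (theta s1 s2 rho) * n
               + Cfun r1 Pup q * l1p + E = 0"
    and eq1m: "Afun s1 s2 rho mu1 mu2 Pum q * m + of_real (theta s1 s2 rho) * n
               + Cfun r1 Pum q * l1m + E = 0"
    and eq2p: "Bfun s1 s2 rho mu1 mu2 Pvp q * m - of_real (theta s1 s2 rho) * n
               + Dfun r2 Pvp q * l2p - E = 0"
    and eq2m: "Bfun s1 s2 rho mu1 mu2 Pvm q * m - of_real (theta s1 s2 rho) * n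
               + Dfun r2 Pvm q * l2m - E = 0"
    and hgamma: "Cfun r1 Pup q \<noteq> 0"
    and hdelta: "Dfun r2 Pvp q \<noteq> 0"
    and hDelta: "- (Afun s1 s2 rho mu1 mu2 Pup q + Bfun s1 s2 rho mu1 mu2 Pvp q) \<noteq> 0"
  shows "let \<alpha> = Afun s1 s2 rho mu1 mu2 Pup q; \<beta> = Bfun s1 s2 rho mu1 mu2 Pvp q;
             \<gamma> = Cfun r1 Pup q; \<delta> = Dfun r2 Pvp q; \<Delta> = - (\<alpha> + \<beta>) in
         l1p = (1 / cnj \<Delta>) * ((- cnj \<gamma> * (\<alpha> + cnj \<beta>) / \<gamma>) * l1m
                                + (cnj \<delta> * (cnj \<alpha> - \<alpha>) / \<gamma>) * l2m) \<and>
         l2p = (1 / cnj \<Delta>) * ((cnj \<gamma> * (cnj \<beta> - \<beta>) / \<delta>) * l1m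
                                + (- cnj \<delta> * (\<beta> + cnj \<alpha>) / \<delta>) * l2m)"
proof -
  define th where "th = theta s1 s2 rho"
  define a where "a = rho^2 - s1 * s2"
  define bl where "bl = 2 * (mu1 * (rho - s2) + mu2 * (rho - s1))"
  have a_neg: "a < 0" using cov unfolding a_def by simp
  have th0: "th \<noteq> 0"
  proof
    assume "th = 0"
    hence "s1 + s2 = 2*rho" unfolding th_def theta_def by simp
    hence r: "rho = (s1+s2)/2" by simp
    have e: "(s1 - s2)^2 = 4*(rho^2 - s1 * s2)" unfolding r by (simp add: power2_eq_square algebra_simps)
    have "(s1 - s2)^2 < 0" unfolding e using cov by simp
    thus False by simp
  qed
  have bp: "\<And>x. branchpoly s1 s2 rho mu1 mu2 x = a*x^2 + bl*x + (mu1-mu2)^2"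
    unfolding branchpoly_def a_def bl_def by simp
  define v where "v = -bl/a"
  have blv: "bl = - a * v" unfolding v_def using a_neg by simp
  have brefl: "branchpoly s1 s2 rho mu1 mu2 (v - q1) = branchpoly s1 s2 rho mu1 mu2 q1"
    unfolding bp blv by (simp add: power2_eq_square algebra_simps)
  have "branchpoly s1 s2 rho mu1 mu2 q1 = 0" using q12_roots by simp
  hence "branchpoly s1 s2 rho mu1 mu2 (v - q1) = 0" using brefl by simp
  hence "v - q1 = q1 \<or> v - q1 = q2" using q12_roots by blast
  hence "2*q1 \<le> v" using q12 by auto
  hence "2*q - v < 0" using hq by simp
  hence "a * (2*q - v) > 0" using a_neg by (simp add: mult_neg_neg)
  moreover have "a * (2*q - v) = 2*a*q + bl" unfolding blv by (simp add: algebra_simps)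
  ultimately have key: "2*a*q + bl > 0" by simp
  have ndU: "2*(s2-rho)*((s2-rho)*Re w+(mu2-mu1)) - 4*th*(2*(s2/2)*Re w + mu2) \<noteq> 0" if "Re w = q" for w :: complex
  proof -
    have "2*(s2-rho)*((s2-rho)*Re w+(mu2-mu1)) - 4*th*(2*(s2/2)*Re w + mu2) = 2*a*q + bl"
      unfolding that th_def theta_def a_def bl_def by (simp add: field_simps power2_eq_square)
    thus ?thesis using key by simp
  qed
  have ndV: "2*(s1-rho)*((s1-rho)*Re w+(mu1-mu2)) - 4*th*(2*(s1/2)*Re w + mu1) \<noteq> 0" if "Re w = q" for w :: complex
  proof -
    have "2*(s1-rho)*((s1-rho)*Re w+(mu1-mu2)) - 4*th*(2*(s1/2)*Re w + mu1) = 2*a*q + bl"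
      unfolding that th_def theta_def a_def bl_def by (simp add: field_simps power2_eq_square)
    thus ?thesis using key by simp
  qed
  have cnjU: "cnj (Ufun s1 s2 rho mu1 mu2 p z) = Ufun s1 s2 rho mu1 mu2 (cnj p) (cnj z)" for p z
    unfolding Ufun_def by simp
  have cnjV: "cnj (Vfun s1 s2 rho mu1 mu2 p z) = Vfun s1 s2 rho mu1 mu2 (cnj p) (cnj z)" for p z
    unfolding Vfun_def by simp
  have symU: "P1u (complex_of_real q + \<i> * complex_of_real e) = cnj (P1u (complex_of_real q - \<i> * complex_of_real e))"
    if e: "e > 0" for e
  proof -
    define z where "z = complex_of_real q - \<i> * complex_of_real e"
    have cz: "cnj z = complex_of_real q + \<i> * complex_of_real e" unfolding z_def by simp
    have zs: "z \<in> slit_domain q1 q2" and czs: "cnj z \<in> slit_domain q1 q2"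
      unfolding slit_domain_def z_def using e by auto
    have r1: "Ufun s1 s2 rho mu1 mu2 (P1u (cnj z)) (cnj z) = 0" using P1u_root czs by blast
    have r2: "Ufun s1 s2 rho mu1 mu2 (cnj (P1u z)) (cnj z) = 0" using P1u_root zs cnjU[of "P1u z" z] by simp
    have "Re (P1u (cnj z)) \<le> Re (cnj (P1u z))" using P1u_root czs r2 by blast
    moreover have "Ufun s1 s2 rho mu1 mu2 (cnj (P1u (cnj z))) z = 0" using r1 cnjU[of "P1u (cnj z)" "cnj z"] by simp
    hence "Re (P1u z) \<le> Re (cnj (P1u (cnj z)))" using P1u_root zs by blast
    ultimately have re: "Re (P1u (cnj z)) = Re (cnj (P1u z))" by simp
    have "P1u (cnj z) = cnj (P1u z)"
    proof (rule quad_root_eq[OF th0])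
      show "Im (cnj z) \<noteq> 0" using e by (simp add: cz)
      show "Re (P1u (cnj z)) = Re (cnj (P1u z))" by (rule re)
      have rq: "Re (cnj z) = q" by (simp add: cz)
      show "2*(s2-rho)*((s2-rho)*Re (cnj z)+(mu2-mu1)) - 4*th*(2*(s2/2)*Re (cnj z) + mu2) \<noteq> 0"
        by (rule ndU[OF rq])
    qed (use r1 r2 in \<open>simp_all add: Ufun_def th_def\<close>)
    thus ?thesis unfolding cz[symmetric] z_def by simp
  qed
  have symV: "P1v (complex_of_real q + \<i> * complex_of_real e) = cnj (P1v (complex_of_real q - \<i> * complex_of_real e))"
    if e: "e > 0" for e
  proof -
    define z where "z = complex_of_real q - \<i> * complex_of_real e"
    have cz: "cnj z = complex_of_real q + \<i> * complex_of_real e" unfolding z_def by simp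
    have zs: "z \<in> slit_domain q1 q2" and czs: "cnj z \<in> slit_domain q1 q2"
      unfolding slit_domain_def z_def using e by auto
    have r1: "Vfun s1 s2 rho mu1 mu2 (P1v (cnj z)) (cnj z) = 0" using P1v_root czs by blast
    have r2: "Vfun s1 s2 rho mu1 mu2 (cnj (P1v z)) (cnj z) = 0" using P1v_root zs cnjV[of "P1v z" z] by simp
    have "Re (P1v (cnj z)) \<le> Re (cnj (P1v z))" using P1v_root czs r2 by blast
    moreover have "Vfun s1 s2 rho mu1 mu2 (cnj (P1v (cnj z))) z = 0" using r1 cnjV[of "P1v (cnj z)" "cnj z"] by simp
    hence "Re (P1v z) \<le> Re (cnj (P1v (cnj z)))" using P1v_root zs by blast
    ultimately have re: "Re (P1v (cnj z)) = Re (cnj (P1v z))" by simp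
    have "P1v (cnj z) = cnj (P1v z)"
    proof (rule quad_root_eq[OF th0])
      show "Im (cnj z) \<noteq> 0" using e by (simp add: cz)
      show "Re (P1v (cnj z)) = Re (cnj (P1v z))" by (rule re)
      have rq: "Re (cnj z) = q" by (simp add: cz)
      show "2*(s1-rho)*((s1-rho)*Re (cnj z)+(mu1-mu2)) - 4*th*(2*(s1/2)*Re (cnj z) + mu1) \<noteq> 0"
        by (rule ndV[OF rq])
    qed (use r1 r2 in \<open>simp_all add: Vfun_def th_def\<close>)
    thus ?thesis unfolding cz[symmetric] z_def by simp
  qed
  have ev: "eventually (\<lambda>e::real. e > 0) (at_right 0)" by (simp add: eventually_at_right_less)
  have "((\<lambda>e::real. P1u (complex_of_real q + \<i> * complex_of_real e)) \<longlongrightarrow> cnj Pup) (at_right 0)"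
    using tendsto_cnj[OF lim_up] by (rule tendsto_cong[THEN iffD1, rotated]) (rule eventually_mono[OF ev], simp add: symU)
  hence Pum: "Pum = cnj Pup" using lim_um tendsto_unique[OF trivial_limit_at_right_real] by blast
  have "((\<lambda>e::real. P1v (complex_of_real q + \<i> * complex_of_real e)) \<longlongrightarrow> cnj Pvp) (at_right 0)"
    using tendsto_cnj[OF lim_vp] by (rule tendsto_cong[THEN iffD1, rotated]) (rule eventually_mono[OF ev], simp add: symV)
  hence Pvm: "Pvm = cnj Pvp" using lim_vm tendsto_unique[OF trivial_limit_at_right_real] by blast
  have cA: "Afun s1 s2 rho mu1 mu2 Pum q = cnj (Afun s1 s2 rho mu1 mu2 Pup q)"
    unfolding Pum Afun_def by simp
  have cB: "Bfun s1 s2 rho mu1 mu2 Pvm q = cnj (Bfun s1 s2 rho mu1 mu2 Pvp q)"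
    unfolding Pvm Bfun_def by simp
  have cC: "Cfun r1 Pum q = cnj (Cfun r1 Pup q)" unfolding Pum Cfun_def by simp
  have cD: "Dfun r2 Pvm q = cnj (Dfun r2 Pvp q)" unfolding Pvm Dfun_def by simp
  define tn where "tn = of_real (theta s1 s2 rho) * n + E"
  have D: "cnj (Afun s1 s2 rho mu1 mu2 Pup q) + cnj (Bfun s1 s2 rho mu1 mu2 Pvp q) \<noteq> 0"
    proof -
    have "Afun s1 s2 rho mu1 mu2 Pup q + Bfun s1 s2 rho mu1 mu2 Pvp q \<noteq> 0"
      using hDelta neg_equal_0_iff_equal by metis
    hence "cnj (Afun s1 s2 rho mu1 mu2 Pup q + Bfun s1 s2 rho mu1 mu2 Pvp q) \<noteq> 0"
      using complex_cnj_zero_iff by blast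
    thus ?thesis by (simp only: complex_cnj_add) simp
  qed
  have R: ?thesis if e1: "a' * m + tn + g * l1p = 0" and e2: "cnj a' * m + tn + cnj g * l1m = 0"
    and e3: "b' * m - tn + d * l2p = 0" and e4: "cnj b' * m - tn + cnj d * l2m = 0"
    and aa: "a' = Afun s1 s2 rho mu1 mu2 Pup q" and bb: "b' = Bfun s1 s2 rho mu1 mu2 Pvp q"
    and gg: "g = Cfun r1 Pup q" and dd: "d = Dfun r2 Pvp q" for a' b' g d
    using alg[OF e1 e2 e3 e4] hgamma hdelta D unfolding aa bb gg dd Let_def by simp
  show ?thesis
    apply (rule R[OF _ _ _ _ refl refl refl refl])
    using eq1p eq1m eq2p eq2m unfolding cA cB cC cD tn_def by (simp_all add: algebra_simps)
qed

end
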